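(* Let $R$ be a local ring with maximal ideal $\mathcal{M}$ such that $\mathcal{M}$ is finitely generated both as a left ideal and as a right ideal, and $\mathcal{M}^k=(0)$ for some $k\in\mathbb{N}$. If every left $R$-module generated by two elements is a direct sum of cyclic modules, then either $R$ is a left Artinian principal left ideal ring or $R$ is a right Artinian principal right ideal ring.
   Context: All rings have identity and modules are unital. A ring $R$ is local if it has a unique maximal left ideal $\mathcal{M}$. *)

theory Defs
  imports "HOL-Algebra.Algebra"
begin

definition left_ideal :: "('a, 'b) ring_scheme \<Rightarrow> 'a set \<Rightarrow> bool" where
  "left_ideal R I \<longleftrightarrow> additive_subgroup I R \<and>
     (\<forall>r\<in>carrier R. \<forall>x\<in>I. r \<otimes>\<^bsub>R\<^esub> x \<in> I)"

definition right_ideal :: "('a, 'b) ring_scheme \<Rightarrow> 'a set \<Rightarrow> bool" where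
  "right_ideal R I \<longleftrightarrow> additive_subgroup I R \<and>
     (\<forall>r\<in>carrier R. \<forall>x\<in>I. x \<otimes>\<^bsub>R\<^esub> r \<in> I)"

definition maximal_left_ideal :: "('a, 'b) ring_scheme \<Rightarrow> 'a set \<Rightarrow> bool" where
  "maximal_left_ideal R I \<longleftrightarrow> left_ideal R I \<and> I \<noteq> carrier R \<and>
     (\<forall>J. left_ideal R J \<and> I \<subseteq> J \<and> J \<noteq> carrier R \<longrightarrow> J = I)"

definition local_ring :: "('a, 'b) ring_scheme \<Rightarrow> bool" where
  "local_ring R \<longleftrightarrow> ring R \<and> (\<exists>!I. maximal_left_ideal R I)"

definition fg_left_ideal :: "('a, 'b) ring_scheme \<Rightarrow> 'a set \<Rightarrow> bool" where
  "fg_left_ideal R I \<longleftrightarrow> (\<exists>S. finite S \<and> S \<subseteq> carrier R \<and>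
     I = {finsum R (\<lambda>s. c s \<otimes>\<^bsub>R\<^esub> s) S | c. c \<in> S \<rightarrow> carrier R})"

definition fg_right_ideal :: "('a, 'b) ring_scheme \<Rightarrow> 'a set \<Rightarrow> bool" where
  "fg_right_ideal R I \<longleftrightarrow> (\<exists>S. finite S \<and> S \<subseteq> carrier R \<and>
     I = {finsum R (\<lambda>s. s \<otimes>\<^bsub>R\<^esub> c s) S | c. c \<in> S \<rightarrow> carrier R})"

(* I^k = (0): every product of k elements of I is zero (I^k is the additive span of these) *)
definition ideal_power_zero :: "('a, 'b) ring_scheme \<Rightarrow> 'a set \<Rightarrow> nat \<Rightarrow> bool" where
  "ideal_power_zero R I k \<longleftrightarrow> (\<forall>xs. length xs = k \<and> set xs \<subseteq> I \<longrightarrow>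
     foldr (\<lambda>x y. x \<otimes>\<^bsub>R\<^esub> y) xs \<one>\<^bsub>R\<^esub> = \<zero>\<^bsub>R\<^esub>)"

definition left_artinian :: "('a, 'b) ring_scheme \<Rightarrow> bool" where
  "left_artinian R \<longleftrightarrow> (\<forall>f :: nat \<Rightarrow> 'a set.
     (\<forall>n. left_ideal R (f n)) \<and> (\<forall>n. f (Suc n) \<subseteq> f n) \<longrightarrow> (\<exists>N. \<forall>n\<ge>N. f n = f N))"

definition right_artinian :: "('a, 'b) ring_scheme \<Rightarrow> bool" where
  "right_artinian R \<longleftrightarrow> (\<forall>f :: nat \<Rightarrow> 'a set.
     (\<forall>n. right_ideal R (f n)) \<and> (\<forall>n. f (Suc n) \<subseteq> f n) \<longrightarrow> (\<exists>N. \<forall>n\<ge>N. f n = f N))"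

definition principal_left_ideal_ring :: "('a, 'b) ring_scheme \<Rightarrow> bool" where
  "principal_left_ideal_ring R \<longleftrightarrow> (\<forall>I. left_ideal R I \<longrightarrow>
     (\<exists>a\<in>carrier R. I = {r \<otimes>\<^bsub>R\<^esub> a | r. r \<in> carrier R}))"

definition principal_right_ideal_ring :: "('a, 'b) ring_scheme \<Rightarrow> bool" where
  "principal_right_ideal_ring R \<longleftrightarrow> (\<forall>I. right_ideal R I \<longrightarrow>
     (\<exists>a\<in>carrier R. I = {a \<otimes>\<^bsub>R\<^esub> r | r. r \<in> carrier R}))"

definition left_module :: "('a, 'c) ring_scheme \<Rightarrow> ('a, 'b) module \<Rightarrow> bool" where
  "left_module R M \<longleftrightarrow> ring R \<and> abelian_group M \<and>
     (\<forall>r\<in>carrier R. \<forall>m\<in>carrier M. smult M r m \<in> carrier M) \<and>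
     (\<forall>r\<in>carrier R. \<forall>m\<in>carrier M. \<forall>n\<in>carrier M.
        smult M r (m \<oplus>\<^bsub>M\<^esub> n) = smult M r m \<oplus>\<^bsub>M\<^esub> smult M r n) \<and>
     (\<forall>r\<in>carrier R. \<forall>s\<in>carrier R. \<forall>m\<in>carrier M.
        smult M (r \<oplus>\<^bsub>R\<^esub> s) m = smult M r m \<oplus>\<^bsub>M\<^esub> smult M s m) \<and>
     (\<forall>r\<in>carrier R. \<forall>s\<in>carrier R. \<forall>m\<in>carrier M.
        smult M (r \<otimes>\<^bsub>R\<^esub> s) m = smult M r (smult M s m)) \<and>
     (\<forall>m\<in>carrier M. smult M \<one>\<^bsub>R\<^esub> m = m)"

definition generated_by_two :: "('a, 'c) ring_scheme \<Rightarrow> ('a, 'b) module \<Rightarrow> bool" where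
  "generated_by_two R M \<longleftrightarrow> (\<exists>x\<in>carrier M. \<exists>y\<in>carrier M.
     carrier M = {smult M r x \<oplus>\<^bsub>M\<^esub> smult M s y | r s. r \<in> carrier R \<and> s \<in> carrier R})"

definition direct_sum_of_cyclics :: "('a, 'c) ring_scheme \<Rightarrow> ('a, 'b) module \<Rightarrow> bool" where
  "direct_sum_of_cyclics R M \<longleftrightarrow> (\<exists>xs. set xs \<subseteq> carrier M \<and>
     (\<forall>m\<in>carrier M. \<exists>c\<in>{..<length xs} \<rightarrow> carrier R.
        m = finsum M (\<lambda>i. smult M (c i) (xs ! i)) {..<length xs}) \<and>
     (\<forall>c\<in>{..<length xs} \<rightarrow> carrier R.
        finsum M (\<lambda>i. smult M (c i) (xs ! i)) {..<length xs} = \<zero>\<^bsub>M\<^esub> \<longrightarrow>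
        (\<forall>i<length xs. smult M (c i) (xs ! i) = \<zero>\<^bsub>M\<^esub>)))"

end

theory Submission
  imports Defs
begin

lemmas (in ring) ring_simprules2
  [algebra ring "ring.zero R" "ring.add R" "a_inv R" "a_minus R" "monoid.one R" "monoid.mult R"] =
  a_closed zero_closed a_inv_closed minus_closed m_closed one_closed
  a_assoc l_zero l_neg a_comm m_assoc l_one l_distr minus_eq
  r_zero r_neg r_neg2 r_neg1 minus_add minus_minus minus_zero
  a_lcomm r_distr l_null r_null l_minus r_minus r_one

lemma foldr_rep_pow:
  assumes "monoid R" "x \<in> carrier R"
  shows "foldr (\<lambda>x y. x \<otimes>\<^bsub>R\<^esub> y) (replicate n x) \<one>\<^bsub>R\<^esub> = x [^]\<^bsub>R\<^esub> n"
proof (induct n)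
  case 0 then show ?case by simp
next
  case (Suc n) then show ?case using monoid.nat_pow_Suc2[OF assms(1) assms(2)] by simp
qed

locale lrm = ring R for R (structure) +
  fixes M :: "'a set" and k :: nat
  assumes maxl: "maximal_left_ideal R M" and pz: "ideal_power_zero R M k"
begin

lemma M_li: "left_ideal R M" using maxl by (simp add: maximal_left_ideal_def)
lemma M_as: "additive_subgroup M R" using M_li by (simp add: left_ideal_def)
lemma M_sub: "M \<subseteq> carrier R" using additive_subgroup.a_subset[OF M_as] .
lemma M_carr: "x \<in> M \<Longrightarrow> x \<in> carrier R" using M_sub by auto
lemma M_add: "x \<in> M \<Longrightarrow> y \<in> M \<Longrightarrow> x \<oplus> y \<in> M" using additive_subgroup.a_closed[OF M_as] by auto
lemma M_zero: "\<zero> \<in> M" using additive_subgroup.zero_closed[OF M_as] .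
lemma M_neg: "x \<in> M \<Longrightarrow> \<ominus> x \<in> M" using additive_subgroup.a_inv_closed[OF M_as] by auto
lemma M_minus: "x \<in> M \<Longrightarrow> y \<in> M \<Longrightarrow> x \<ominus> y \<in> M" using M_add M_neg by (simp add: minus_eq)
lemma M_lmult: "r \<in> carrier R \<Longrightarrow> x \<in> M \<Longrightarrow> r \<otimes> x \<in> M" using M_li by (simp add: left_ideal_def)
lemma M_ne: "M \<noteq> carrier R" using maxl by (simp add: maximal_left_ideal_def)
lemma one_notin: "\<one> \<notin> M"
proof
  assume "\<one> \<in> M"
  then have "carrier R \<subseteq> M" using M_lmult[of _ \<one>] by (metis r_one subsetI)
  then show False using M_ne M_sub by auto
qed
lemma one_ne_zero: "\<one> \<noteq> \<zero>" using one_notin M_zero by auto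

lemma pow_M: assumes "x \<in> M" shows "x [^] k = \<zero>"
proof -
  have "length (replicate k x) = k \<and> set (replicate k x) \<subseteq> M" using assms by auto
  then have "foldr (\<lambda>x y. x \<otimes> y) (replicate k x) \<one> = \<zero>"
    using pz unfolding ideal_power_zero_def by blast
  then show ?thesis using foldr_rep_pow[OF monoid_axioms M_carr[OF assms], of k] by simp
qed

lemma k_pos: "k > 0"
proof (rule ccontr)
  assume "\<not> k > 0" then have "k = 0" by simp
  then have "\<one> = \<zero>" using pz unfolding ideal_power_zero_def by (metis foldr.simps(1) id_apply empty_subsetI list.size(3) set_empty)
  then show False using one_ne_zero by simp
qed

lemma geom: "m \<in> carrier R \<Longrightarrow> (\<Oplus>i\<in>{..<n}. m [^] (i::nat)) \<otimes> (\<one> \<ominus> m) = \<one> \<ominus> m [^] (n::nat)"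
proof (induct n)
  case 0 then show ?case by (simp add: r_neg minus_eq)
next
  case (Suc n)
  have "(\<Oplus>i\<in>{..<Suc n}. m [^] i) = m [^] n \<oplus> (\<Oplus>i\<in>{..<n}. m [^] i)"
    using Suc by (simp add: lessThan_Suc finsum_insert)
  moreover have "m [^] Suc n = m [^] n \<otimes> m" by simp
  moreover have c: "m [^] n \<in> carrier R" "(\<Oplus>i\<in>{..<n}. m [^] i) \<in> carrier R"
    using Suc by (auto intro: finsum_closed)
  moreover have "m [^] n \<otimes> (\<one> \<ominus> m) \<oplus> (\<one> \<ominus> m [^] n) = \<one> \<ominus> m [^] n \<otimes> m"
    using c Suc by algebra
  moreover have "(m [^] n \<oplus> (\<Oplus>i\<in>{..<n}. m [^] i)) \<otimes> (\<one> \<ominus> m)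
      = m [^] n \<otimes> (\<one> \<ominus> m) \<oplus> (\<Oplus>i\<in>{..<n}. m [^] i) \<otimes> (\<one> \<ominus> m)"
    using c Suc by (simp add: l_distr)
  ultimately show ?case using Suc by simp
qed

lemma left_inv: assumes x: "x \<in> carrier R" "x \<notin> M" shows "\<exists>s\<in>carrier R. s \<otimes> x = \<one>"
proof -
  define J where "J = {r \<otimes> x \<oplus> m | r m. r \<in> carrier R \<and> m \<in> M}"
  have Jsub: "J \<subseteq> carrier R" using x M_carr by (auto simp: J_def)
  have "additive_subgroup J R"
  proof (rule additive_subgroupI, rule subgroup.intro)
    show "J \<subseteq> carrier (add_monoid R)" using Jsub by simp
    show "\<one>\<^bsub>add_monoid R\<^esub> \<in> J" unfolding J_def using x M_zero
      by simp (metis l_null r_zero zero_closed)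
    fix u v assume "u \<in> J" "v \<in> J"
    then obtain r m r' m' where u: "u = r \<otimes> x \<oplus> m" "r \<in> carrier R" "m \<in> M"
      and v: "v = r' \<otimes> x \<oplus> m'" "r' \<in> carrier R" "m' \<in> M" by (auto simp: J_def)
    have "u \<oplus> v = (r \<oplus> r') \<otimes> x \<oplus> (m \<oplus> m')"
      using u v x M_carr by simp algebra
    then show "u \<otimes>\<^bsub>add_monoid R\<^esub> v \<in> J" unfolding J_def using u v M_add by auto
    have "\<ominus> u = (\<ominus> r) \<otimes> x \<oplus> (\<ominus> m)" using u x M_carr by simp algebra
    then show "inv\<^bsub>add_monoid R\<^esub> u \<in> J" unfolding J_def a_inv_def[symmetric] using u M_neg by auto
  qed
  moreover have "\<forall>r\<in>carrier R. \<forall>y\<in>J. r \<otimes> y \<in> J"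
  proof (intro ballI)
    fix r y assume "r \<in> carrier R" "y \<in> J"
    then obtain s m where y: "y = s \<otimes> x \<oplus> m" "s \<in> carrier R" "m \<in> M" by (auto simp: J_def)
    have "r \<otimes> y = (r \<otimes> s) \<otimes> x \<oplus> r \<otimes> m" using y x M_carr \<open>r \<in> carrier R\<close> by simp algebra
    then show "r \<otimes> y \<in> J" unfolding J_def using y M_lmult \<open>r \<in> carrier R\<close> by auto
  qed
  ultimately have lJ: "left_ideal R J" by (simp add: left_ideal_def)
  have MJ: "M \<subseteq> J"
  proof
    fix m assume "m \<in> M"
    then have "m = \<zero> \<otimes> x \<oplus> m" using x M_carr by simp
    then show "m \<in> J" unfolding J_def using \<open>m \<in> M\<close> by blast
  qed
  have "x = \<one> \<otimes> x \<oplus> \<zero>" using x by simp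
  then have "x \<in> J" unfolding J_def using x M_zero one_closed by blast
  then have "J = carrier R" using maxl lJ MJ x(2) unfolding maximal_left_ideal_def by blast
  then have "\<one> \<in> J" by simp
  then obtain r m where rm: "\<one> = r \<otimes> x \<oplus> m" "r \<in> carrier R" "m \<in> M" unfolding J_def by blast
  define g where "g = (\<Oplus>i\<in>{..<k}. m [^] i)"
  have gc: "g \<in> carrier R" unfolding g_def using M_carr rm by (auto intro: finsum_closed)
  have "g \<otimes> (\<one> \<ominus> m) = \<one>" unfolding g_def using geom[of m k] pow_M[OF rm(3)] M_carr[OF rm(3)] by (simp add: minus_eq)
  moreover have "\<one> \<ominus> m = r \<otimes> x" using rm x M_carr by (simp add: minus_eq a_assoc r_neg)
  ultimately have "(g \<otimes> r) \<otimes> x = \<one>" using gc rm x by (simp add: m_assoc)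
  then show ?thesis using gc rm by blast
qed


lemma pow_M_gen: "x \<in> M \<Longrightarrow> n \<ge> k \<Longrightarrow> x [^] (n::nat) = \<zero>"
proof -
  assume x: "x \<in> M" and n: "n \<ge> k"
  have "x [^] n = x [^] k \<otimes> x [^] (n - k)" using n M_carr[OF x] by (simp add: nat_pow_mult)
  then show ?thesis using pow_M[OF x] M_carr[OF x] by simp
qed

lemma M_rmult: assumes m: "m \<in> M" and r: "r \<in> carrier R" shows "m \<otimes> r \<in> M"
proof (rule ccontr)
  assume nm: "m \<otimes> r \<notin> M"
  have mc: "m \<in> carrier R" using M_carr m by simp
  obtain s where s: "s \<in> carrier R" "s \<otimes> (m \<otimes> r) = \<one>" using left_inv[OF _ nm] mc r by auto
  define z where "z = r \<otimes> s \<otimes> m"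
  have zM: "z \<in> M" unfolding z_def using M_lmult m r s by simp
  have zc: "z \<in> carrier R" using M_carr zM by simp
  have zr: "z \<otimes> r = r" unfolding z_def using s mc r by (simp add: m_assoc)
  have "\<And>j. z [^] (j::nat) \<otimes> r = r"
  proof -
    fix j :: nat show "z [^] j \<otimes> r = r"
    proof (induct j)
      case 0 then show ?case using r by simp
    next
      case (Suc j)
      have "z [^] Suc j \<otimes> r = z [^] j \<otimes> (z \<otimes> r)" using zc r by (simp add: m_assoc)
      then show ?case using zr Suc by simp
    qed
  qed
  then have "r = \<zero>" using pow_M[OF zM] r by (metis l_null)
  then have "m \<otimes> r = \<zero>" using mc by simp
  then show False using nm M_zero by simp
qed

lemma notM_unit: assumes x: "x \<in> carrier R" "x \<notin> M" shows "x \<in> Units R"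
proof -
  obtain s where s: "s \<in> carrier R" "s \<otimes> x = \<one>" using left_inv[OF x] by auto
  have "s \<notin> M"
  proof
    assume "s \<in> M" then have "s \<otimes> x \<in> M" using M_rmult x by simp
    then show False using s one_notin by simp
  qed
  then obtain t where t: "t \<in> carrier R" "t \<otimes> s = \<one>" using left_inv s by auto
  have "(t \<otimes> s) \<otimes> x = t \<otimes> (s \<otimes> x)" by (rule m_assoc[OF t(1) s(1) x(1)])
  then have "x = t" using s t x by simp
  then have "x \<otimes> s = \<one>" using t by simp
  then show ?thesis using s x unfolding Units_def by auto
qed

lemma unit_notM: "u \<in> Units R \<Longrightarrow> u \<notin> M"
proof
  assume u: "u \<in> Units R" "u \<in> M"
  then have "inv u \<otimes> u \<in> M" by (intro M_lmult) auto
  then show False using u one_notin by simp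
qed

lemma right_conclusion:
  assumes aM: "a \<in> M" and Mr: "M = {a \<otimes> r | r. r \<in> carrier R}"
  shows "right_artinian R \<and> principal_right_ideal_ring R"
proof -
  have ac: "a \<in> carrier R" using M_carr aM by simp
  define A where "A j = {a [^] (j::nat) \<otimes> r | r. r \<in> carrier R}" for j
  have form_aux: "\<And>n y. y \<in> carrier R \<Longrightarrow> a [^] (k - n) \<otimes> y = \<zero> \<or>
       (\<exists>j u. u \<in> Units R \<and> a [^] (k - n) \<otimes> y = a [^] (j::nat) \<otimes> u)"
  proof -
    fix n :: nat
    show "\<And>y. y \<in> carrier R \<Longrightarrow> a [^] (k - n) \<otimes> y = \<zero> \<or>
       (\<exists>j u. u \<in> Units R \<and> a [^] (k - n) \<otimes> y = a [^] (j::nat) \<otimes> u)"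
    proof (induct n)
      case 0 then show ?case using pow_M[OF aM] by simp
    next
      case (Suc n)
      show ?case
      proof (cases "n < k")
        case False then have "k - Suc n = k - n" by simp
        then show ?thesis using Suc by simp
      next
        case True
        then have kn: "k - n = Suc (k - Suc n)" by simp
        show ?thesis
        proof (cases "y \<in> M")
          case False then show ?thesis using notM_unit Suc by blast
        next
          case True
          then obtain y' where y': "y = a \<otimes> y'" "y' \<in> carrier R" using Mr by auto
          have "a [^] (k - Suc n) \<otimes> y = a [^] (k - n) \<otimes> y'"
            using y' ac kn by (simp add: m_assoc nat_pow_Suc2)
          then show ?thesis using Suc(1)[OF y'(2)] by simp
        qed
      qed
    qed
  qed
  have form: "\<And>x. x \<in> carrier R \<Longrightarrow> x = \<zero> \<or> (\<exists>j u. u \<in> Units R \<and> x = a [^] (j::nat) \<otimes> u)"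
    using form_aux[of _ k] by simp
  have Ak: "\<And>j. j \<ge> k \<Longrightarrow> A j = {\<zero>}"
    using pow_M_gen[OF aM] unfolding A_def by (auto intro!: exI[of _ \<zero>])
  have classify: "\<And>I. right_ideal R I \<Longrightarrow> \<exists>j\<le>k. I = A j"
  proof -
    fix I assume rI: "right_ideal R I"
    have asI: "additive_subgroup I R" using rI by (simp add: right_ideal_def)
    have Isub: "I \<subseteq> carrier R" using additive_subgroup.a_subset[OF asI] .
    have I0: "\<zero> \<in> I" using additive_subgroup.zero_closed[OF asI] .
    have Irm: "\<And>x r. x \<in> I \<Longrightarrow> r \<in> carrier R \<Longrightarrow> x \<otimes> r \<in> I" using rI by (simp add: right_ideal_def)
    show "\<exists>j\<le>k. I = A j"
    proof (cases "I \<subseteq> {\<zero>}")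
      case True then have "I = A k" using Ak I0 by auto
      then show ?thesis by auto
    next
      case False
      then obtain x where x: "x \<in> I" "x \<noteq> \<zero>" by auto
      then obtain j u where ju: "u \<in> Units R" "x = a [^] (j::nat) \<otimes> u" using form Isub by blast
      have eq: "a [^] j = x \<otimes> inv u" using ju ac by (simp add: m_assoc Units_closed)
      have "x \<otimes> inv u \<in> I" using Irm x ju by simp
      then have "a [^] j \<in> I" by (subst eq)
      define j0 where "j0 = (LEAST j. a [^] (j::nat) \<in> I)"
      have j0I: "a [^] j0 \<in> I" unfolding j0_def using \<open>a [^] j \<in> I\<close> by (rule LeastI)
      have j0min: "\<And>i. a [^] (i::nat) \<in> I \<Longrightarrow> j0 \<le> i" unfolding j0_def by (rule Least_le)
      have "I = A j0"
      proof
        show "A j0 \<subseteq> I" unfolding A_def using Irm j0I by auto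
        show "I \<subseteq> A j0"
        proof
          fix v assume v: "v \<in> I"
          show "v \<in> A j0"
          proof (cases "v = \<zero>")
            case True then show ?thesis unfolding A_def using ac
              by (metis (mono_tags, lifting) mem_Collect_eq nat_pow_closed r_null zero_closed)
          next
            case False
            then obtain i u' where iu: "u' \<in> Units R" "v = a [^] (i::nat) \<otimes> u'" using form Isub v by blast
            have eq: "a [^] i = v \<otimes> inv u'" using iu ac by (simp add: m_assoc Units_closed)
            have "v \<otimes> inv u' \<in> I" using Irm v iu by simp
            then have "a [^] i \<in> I" by (subst eq)
            then have "j0 \<le> i" by (rule j0min)
            then have "a [^] i = a [^] j0 \<otimes> a [^] (i - j0)" using ac by (simp add: nat_pow_mult)
            then have "v = a [^] j0 \<otimes> (a [^] (i - j0) \<otimes> u')" using iu ac by (simp add: m_assoc Units_closed)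
            then show ?thesis unfolding A_def using iu ac by blast
          qed
        qed
      qed
      then show ?thesis
      proof (cases "j0 \<le> k")
        case True then show ?thesis using \<open>I = A j0\<close> by auto
      next
        case False then show ?thesis using \<open>I = A j0\<close> Ak[of j0] Ak[of k] by auto
      qed
    qed
  qed
  have prir: "principal_right_ideal_ring R"
    unfolding principal_right_ideal_ring_def
  proof (intro allI impI)
    fix I assume "right_ideal R I"
    then obtain j where "I = A j" using classify by blast
    then show "\<exists>a\<in>carrier R. I = {a \<otimes> r |r. r \<in> carrier R}" unfolding A_def using ac by blast
  qed
  have art: "right_artinian R"
    unfolding right_artinian_def
  proof (intro allI impI)
    fix f :: "nat \<Rightarrow> 'a set"
    assume h: "(\<forall>n. right_ideal R (f n)) \<and> (\<forall>n. f (Suc n) \<subseteq> f n)"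
    have "range f \<subseteq> A ` {..k}" using classify h by blast
    then have fin: "finite (range f)" by (rule finite_subset) simp
    obtain m where m: "m \<in> range f" "\<forall>b\<in>range f. b \<le> m \<longrightarrow> m = b"
      using finite_has_minimal2[OF fin, of "f 0"] by auto
    then obtain N where N: "m = f N" by auto
    have "\<forall>n\<ge>N. f n = f N"
    proof (intro allI impI)
      fix n assume "n \<ge> N"
      then have "f n \<subseteq> f N" using lift_Suc_antimono_le[of f] h by blast
      then show "f n = f N" using m N by auto
    qed
    then show "\<exists>N. \<forall>n\<ge>N. f n = f N" by blast
  qed
  show ?thesis using prir art by simp
qed

end



context ring begin

definition C2 :: "('a \<times> 'a) set" where "C2 = carrier R \<times> carrier R"
definition padd :: "'a \<times> 'a \<Rightarrow> 'a \<times> 'a \<Rightarrow> 'a \<times> 'a" where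
  "padd v w = (fst v \<oplus> fst w, snd v \<oplus> snd w)"
definition psm :: "'a \<Rightarrow> 'a \<times> 'a \<Rightarrow> 'a \<times> 'a" where
  "psm r v = (r \<otimes> fst v, r \<otimes> snd v)"
definition eqv :: "'a \<Rightarrow> 'a \<Rightarrow> 'a \<times> 'a \<Rightarrow> 'a \<times> 'a \<Rightarrow> bool" where
  "eqv a b v w \<longleftrightarrow> v \<in> C2 \<and> w \<in> C2 \<and>
     (\<exists>r\<in>carrier R. fst v \<ominus> fst w = r \<otimes> a \<and> snd v \<ominus> snd w = r \<otimes> b)"
definition pr :: "'a \<Rightarrow> 'a \<Rightarrow> 'a \<times> 'a \<Rightarrow> 'a \<times> 'a" where
  "pr a b v = (SOME w. eqv a b w v)"
definition QM :: "'a \<Rightarrow> 'a \<Rightarrow> ('a, 'a \<times> 'a) module" where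
  "QM a b = \<lparr> carrier = pr a b ` C2, monoid.mult = (\<lambda>x y. x), monoid.one = (\<zero>, \<zero>),
     ring.zero = pr a b (\<zero>, \<zero>), ring.add = (\<lambda>v w. pr a b (padd v w)),
     module.smult = (\<lambda>r v. pr a b (psm r v)) \<rparr>"

end

definition psum :: "('a, 'c) ring_scheme \<Rightarrow> ('b \<Rightarrow> 'a \<times> 'a) \<Rightarrow> 'b set \<Rightarrow> 'a \<times> 'a" where
  "psum R f I = (\<Oplus>\<^bsub>R\<^esub>i\<in>I. fst (f i), \<Oplus>\<^bsub>R\<^esub>i\<in>I. snd (f i))"

locale qm = ring R for R (structure) +
  fixes a b assumes ac: "a \<in> carrier R" and bc: "b \<in> carrier R"
begin

abbreviation "E \<equiv> eqv a b"
abbreviation "\<pi> \<equiv> pr a b"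
abbreviation "Q \<equiv> QM a b"

lemma C2I[intro, simp]: "x \<in> carrier R \<Longrightarrow> y \<in> carrier R \<Longrightarrow> (x, y) \<in> C2" by (simp add: C2_def)
lemma C2_fst: "v \<in> C2 \<Longrightarrow> fst v \<in> carrier R" by (auto simp: C2_def)
lemma C2_snd: "v \<in> C2 \<Longrightarrow> snd v \<in> carrier R" by (auto simp: C2_def)
lemma padd_C2[simp]: "v \<in> C2 \<Longrightarrow> w \<in> C2 \<Longrightarrow> padd v w \<in> C2"
  by (auto simp: C2_def padd_def)
lemma psm_C2[simp]: "r \<in> carrier R \<Longrightarrow> v \<in> C2 \<Longrightarrow> psm r v \<in> C2"
  by (auto simp: C2_def psm_def)

lemma padd_pair[simp]: "padd (p, q) (p', q') = (p \<oplus> p', q \<oplus> q')" by (simp add: padd_def)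
lemma psm_pair[simp]: "psm r (p, q) = (r \<otimes> p, r \<otimes> q)" by (simp add: psm_def)

lemma E_refl: assumes v: "v \<in> C2" shows "E v v"
proof -
  have "fst v \<ominus> fst v = \<zero> \<otimes> a" "snd v \<ominus> snd v = \<zero> \<otimes> b"
    using C2_fst[OF v] C2_snd[OF v] ac bc by (simp_all add: r_neg minus_eq)
  then show ?thesis unfolding eqv_def using v by blast
qed

lemma E_sym: assumes "E v w" shows "E w v"
proof -
  obtain r where r: "r \<in> carrier R" "fst v \<ominus> fst w = r \<otimes> a" "snd v \<ominus> snd w = r \<otimes> b"
    and vw: "v \<in> C2" "w \<in> C2" using assms unfolding eqv_def by auto
  have c: "fst v \<in> carrier R" "fst w \<in> carrier R" "snd v \<in> carrier R" "snd w \<in> carrier R"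
    using vw C2_fst C2_snd by auto
  have "fst w \<ominus> fst v = (\<ominus> r) \<otimes> a"
  proof -
    have "fst w \<ominus> fst v = \<ominus> (fst v \<ominus> fst w)" using c by algebra
    then show ?thesis using r ac by (simp add: l_minus)
  qed
  moreover have "snd w \<ominus> snd v = (\<ominus> r) \<otimes> b"
  proof -
    have "snd w \<ominus> snd v = \<ominus> (snd v \<ominus> snd w)" using c by algebra
    then show ?thesis using r bc by (simp add: l_minus)
  qed
  ultimately show ?thesis unfolding eqv_def using vw r by auto
qed

lemma E_trans: assumes "E u v" "E v w" shows "E u w"
proof -
  obtain r where r: "r \<in> carrier R" "fst u \<ominus> fst v = r \<otimes> a" "snd u \<ominus> snd v = r \<otimes> b"
    and uv: "u \<in> C2" "v \<in> C2" using assms(1) unfolding eqv_def by auto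
  obtain s where s: "s \<in> carrier R" "fst v \<ominus> fst w = s \<otimes> a" "snd v \<ominus> snd w = s \<otimes> b"
    and w: "w \<in> C2" using assms(2) unfolding eqv_def by auto
  have c: "fst u \<in> carrier R" "fst v \<in> carrier R" "fst w \<in> carrier R"
     "snd u \<in> carrier R" "snd v \<in> carrier R" "snd w \<in> carrier R"
    using uv w C2_fst C2_snd by auto
  have "fst u \<ominus> fst w = (fst u \<ominus> fst v) \<oplus> (fst v \<ominus> fst w)" using c by algebra
  also have "\<dots> = (r \<oplus> s) \<otimes> a" using r s ac by (simp add: l_distr)
  finally have 1: "fst u \<ominus> fst w = (r \<oplus> s) \<otimes> a" .
  have "snd u \<ominus> snd w = (snd u \<ominus> snd v) \<oplus> (snd v \<ominus> snd w)" using c by algebra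
  also have "\<dots> = (r \<oplus> s) \<otimes> b" using r s bc by (simp add: l_distr)
  finally have 2: "snd u \<ominus> snd w = (r \<oplus> s) \<otimes> b" .
  show ?thesis unfolding eqv_def using uv w r s 1 2 by auto
qed

lemma E_C2: "E v w \<Longrightarrow> v \<in> C2 \<and> w \<in> C2" by (simp add: eqv_def)

lemma pi_E: "v \<in> C2 \<Longrightarrow> E (\<pi> v) v"
  unfolding pr_def by (rule someI[of _ v]) (rule E_refl)

lemma pi_C2[simp]: "v \<in> C2 \<Longrightarrow> \<pi> v \<in> C2" using pi_E E_C2 by blast

lemma pi_eq_iff: assumes "v \<in> C2" "w \<in> C2" shows "\<pi> v = \<pi> w \<longleftrightarrow> E v w"
proof
  assume "\<pi> v = \<pi> w"
  then show "E v w" using pi_E[OF assms(1)] pi_E[OF assms(2)] E_sym E_trans by metis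
next
  assume vw: "E v w"
  have "(\<lambda>x. E x v) = (\<lambda>x. E x w)" using vw E_sym E_trans by (metis)
  then show "\<pi> v = \<pi> w" unfolding pr_def by simp
qed

lemma pi_pi[simp]: "v \<in> C2 \<Longrightarrow> \<pi> (\<pi> v) = \<pi> v"
  using pi_eq_iff pi_E pi_C2 by blast

lemma E_padd: assumes "E v v'" "E w w'" shows "E (padd v w) (padd v' w')"
proof -
  obtain r where r: "r \<in> carrier R" "fst v \<ominus> fst v' = r \<otimes> a" "snd v \<ominus> snd v' = r \<otimes> b"
    and c1: "v \<in> C2" "v' \<in> C2" using assms(1) unfolding eqv_def by auto
  obtain s where s: "s \<in> carrier R" "fst w \<ominus> fst w' = s \<otimes> a" "snd w \<ominus> snd w' = s \<otimes> b"
    and c2: "w \<in> C2" "w' \<in> C2" using assms(2) unfolding eqv_def by auto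
  have c: "fst v \<in> carrier R" "fst v' \<in> carrier R" "fst w \<in> carrier R" "fst w' \<in> carrier R"
     "snd v \<in> carrier R" "snd v' \<in> carrier R" "snd w \<in> carrier R" "snd w' \<in> carrier R"
    using c1 c2 C2_fst C2_snd by auto
  have "(fst v \<oplus> fst w) \<ominus> (fst v' \<oplus> fst w') = (fst v \<ominus> fst v') \<oplus> (fst w \<ominus> fst w')" using c by algebra
  also have "\<dots> = (r \<oplus> s) \<otimes> a" using r s ac by (simp add: l_distr)
  finally have 1: "(fst v \<oplus> fst w) \<ominus> (fst v' \<oplus> fst w') = (r \<oplus> s) \<otimes> a" .
  have "(snd v \<oplus> snd w) \<ominus> (snd v' \<oplus> snd w') = (snd v \<ominus> snd v') \<oplus> (snd w \<ominus> snd w')" using c by algebra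
  also have "\<dots> = (r \<oplus> s) \<otimes> b" using r s bc by (simp add: l_distr)
  finally have 2: "(snd v \<oplus> snd w) \<ominus> (snd v' \<oplus> snd w') = (r \<oplus> s) \<otimes> b" .
  show ?thesis unfolding eqv_def using c c1 c2 r s 1 2 by (auto simp: padd_def)
qed

lemma E_psm: assumes "E v v'" "t \<in> carrier R" shows "E (psm t v) (psm t v')"
proof -
  obtain r where r: "r \<in> carrier R" "fst v \<ominus> fst v' = r \<otimes> a" "snd v \<ominus> snd v' = r \<otimes> b"
    and c1: "v \<in> C2" "v' \<in> C2" using assms(1) unfolding eqv_def by auto
  have c: "fst v \<in> carrier R" "fst v' \<in> carrier R" "snd v \<in> carrier R" "snd v' \<in> carrier R"
    using c1 C2_fst C2_snd by auto
  have "t \<otimes> fst v \<ominus> t \<otimes> fst v' = t \<otimes> (fst v \<ominus> fst v')" using c assms(2) by algebra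
  also have "\<dots> = (t \<otimes> r) \<otimes> a" using r ac assms(2) by (simp add: m_assoc)
  finally have 1: "t \<otimes> fst v \<ominus> t \<otimes> fst v' = (t \<otimes> r) \<otimes> a" .
  have "t \<otimes> snd v \<ominus> t \<otimes> snd v' = t \<otimes> (snd v \<ominus> snd v')" using c assms(2) by algebra
  also have "\<dots> = (t \<otimes> r) \<otimes> b" using r bc assms(2) by (simp add: m_assoc)
  finally have 2: "t \<otimes> snd v \<ominus> t \<otimes> snd v' = (t \<otimes> r) \<otimes> b" .
  show ?thesis unfolding eqv_def using c c1 r 1 2 assms(2) by (auto simp: psm_def)
qed

lemma Q_carrier: "carrier Q = \<pi> ` C2" by (simp add: QM_def)
lemma Q_zero: "\<zero>\<^bsub>Q\<^esub> = \<pi> (\<zero>, \<zero>)" by (simp add: QM_def)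
lemma Q_add_raw: "x \<oplus>\<^bsub>Q\<^esub> y = \<pi> (padd x y)" by (simp add: QM_def)
lemma Q_smult_raw: "smult Q r x = \<pi> (psm r x)" by (simp add: QM_def)

lemma Q_add[simp]: "v \<in> C2 \<Longrightarrow> w \<in> C2 \<Longrightarrow> \<pi> v \<oplus>\<^bsub>Q\<^esub> \<pi> w = \<pi> (padd v w)"
  unfolding Q_add_raw using pi_eq_iff E_padd pi_E by simp

lemma Q_smult[simp]: "r \<in> carrier R \<Longrightarrow> v \<in> C2 \<Longrightarrow> smult Q r (\<pi> v) = \<pi> (psm r v)"
  unfolding Q_smult_raw using pi_eq_iff E_psm pi_E by simp


lemma Q_elem: "x \<in> carrier Q \<Longrightarrow> \<exists>p q. p \<in> carrier R \<and> q \<in> carrier R \<and> x = \<pi> (p, q)"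
  unfolding Q_carrier C2_def by auto

lemma pi_in_Q[simp]: "p \<in> carrier R \<Longrightarrow> q \<in> carrier R \<Longrightarrow> \<pi> (p, q) \<in> carrier Q"
  unfolding Q_carrier by auto

lemma Q_add2[simp]: "p \<in> carrier R \<Longrightarrow> q \<in> carrier R \<Longrightarrow> p' \<in> carrier R \<Longrightarrow> q' \<in> carrier R \<Longrightarrow>
  \<pi> (p, q) \<oplus>\<^bsub>Q\<^esub> \<pi> (p', q') = \<pi> (p \<oplus> p', q \<oplus> q')"
  by (simp add: padd_def)

lemma Q_smult2[simp]: "r \<in> carrier R \<Longrightarrow> p \<in> carrier R \<Longrightarrow> q \<in> carrier R \<Longrightarrow>
  smult Q r (\<pi> (p, q)) = \<pi> (r \<otimes> p, r \<otimes> q)"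
  by (simp add: psm_def)

lemma Q_abelian_group: "abelian_group Q"
proof (rule abelian_groupI)
  fix x y assume "x \<in> carrier Q" "y \<in> carrier Q"
  then obtain p q p' q' where "p \<in> carrier R" "q \<in> carrier R" "x = \<pi> (p, q)"
    "p' \<in> carrier R" "q' \<in> carrier R" "y = \<pi> (p', q')" using Q_elem by meson
  then show "x \<oplus>\<^bsub>Q\<^esub> y \<in> carrier Q" by simp
next
  show "\<zero>\<^bsub>Q\<^esub> \<in> carrier Q" unfolding Q_zero by simp
next
  fix x y z assume "x \<in> carrier Q" "y \<in> carrier Q" "z \<in> carrier Q"
  then obtain p q p' q' p'' q'' where "p \<in> carrier R" "q \<in> carrier R" "x = \<pi> (p, q)"
    "p' \<in> carrier R" "q' \<in> carrier R" "y = \<pi> (p', q')"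
    "p'' \<in> carrier R" "q'' \<in> carrier R" "z = \<pi> (p'', q'')" using Q_elem by meson
  then show "x \<oplus>\<^bsub>Q\<^esub> y \<oplus>\<^bsub>Q\<^esub> z = x \<oplus>\<^bsub>Q\<^esub> (y \<oplus>\<^bsub>Q\<^esub> z)"
    by (simp add: a_assoc)
next
  fix x y assume "x \<in> carrier Q" "y \<in> carrier Q"
  then obtain p q p' q' where "p \<in> carrier R" "q \<in> carrier R" "x = \<pi> (p, q)"
    "p' \<in> carrier R" "q' \<in> carrier R" "y = \<pi> (p', q')" using Q_elem by meson
  then show "x \<oplus>\<^bsub>Q\<^esub> y = y \<oplus>\<^bsub>Q\<^esub> x"
    by (simp add: a_comm)
next
  fix x assume "x \<in> carrier Q"
  then obtain p q where "p \<in> carrier R" "q \<in> carrier R" "x = \<pi> (p, q)" using Q_elem by meson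
  then show "\<zero>\<^bsub>Q\<^esub> \<oplus>\<^bsub>Q\<^esub> x = x" unfolding Q_zero by simp
next
  fix x assume "x \<in> carrier Q"
  then obtain p q where pq: "p \<in> carrier R" "q \<in> carrier R" "x = \<pi> (p, q)" using Q_elem by blast
  then have "\<pi> (\<ominus> p, \<ominus> q) \<oplus>\<^bsub>Q\<^esub> x = \<zero>\<^bsub>Q\<^esub>" unfolding Q_zero by (simp add: l_neg)
  moreover have "\<pi> (\<ominus> p, \<ominus> q) \<in> carrier Q" using pq by simp
  ultimately show "\<exists>y\<in>carrier Q. y \<oplus>\<^bsub>Q\<^esub> x = \<zero>\<^bsub>Q\<^esub>" by blast
qed

lemma Q_left_module: "left_module R Q"
  unfolding left_module_def
proof (intro conjI ballI)
  show "ring R" by (rule ring_axioms)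
  show "abelian_group Q" by (rule Q_abelian_group)
next
  fix r m assume r: "r \<in> carrier R" and "m \<in> carrier Q"
  then obtain p q where "p \<in> carrier R" "q \<in> carrier R" "m = \<pi> (p, q)" using Q_elem by meson
  then show "smult Q r m \<in> carrier Q" using r by simp
next
  fix r m n assume "r \<in> carrier R" "m \<in> carrier Q" "n \<in> carrier Q"
  then obtain p q p' q' where "p \<in> carrier R" "q \<in> carrier R" "m = \<pi> (p, q)"
    "p' \<in> carrier R" "q' \<in> carrier R" "n = \<pi> (p', q')" "r \<in> carrier R" using Q_elem by meson
  then show "smult Q r (m \<oplus>\<^bsub>Q\<^esub> n) = smult Q r m \<oplus>\<^bsub>Q\<^esub> smult Q r n"
    by (simp add: r_distr)
next
  fix r s m assume "r \<in> carrier R" "s \<in> carrier R" "m \<in> carrier Q"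
  then obtain p q where "p \<in> carrier R" "q \<in> carrier R" "m = \<pi> (p, q)" "r \<in> carrier R" "s \<in> carrier R"
    using Q_elem by meson
  then show "smult Q (r \<oplus> s) m = smult Q r m \<oplus>\<^bsub>Q\<^esub> smult Q s m"
    by (simp add: l_distr)
next
  fix r s m assume "r \<in> carrier R" "s \<in> carrier R" "m \<in> carrier Q"
  then obtain p q where "p \<in> carrier R" "q \<in> carrier R" "m = \<pi> (p, q)" "r \<in> carrier R" "s \<in> carrier R"
    using Q_elem by meson
  then show "smult Q (r \<otimes> s) m = smult Q r (smult Q s m)"
    by (simp add: m_assoc)
next
  fix m assume "m \<in> carrier Q"
  then obtain p q where "p \<in> carrier R" "q \<in> carrier R" "m = \<pi> (p, q)" using Q_elem by meson
  then show "smult Q \<one> m = m" by simp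
qed

lemma Q_gen2: "generated_by_two R Q"
  unfolding generated_by_two_def
proof (intro bexI)
  show "carrier Q = {smult Q r (\<pi> (\<one>, \<zero>)) \<oplus>\<^bsub>Q\<^esub> smult Q s (\<pi> (\<zero>, \<one>)) |r s. r \<in> carrier R \<and> s \<in> carrier R}"
  proof
    show "carrier Q \<subseteq> {smult Q r (\<pi> (\<one>, \<zero>)) \<oplus>\<^bsub>Q\<^esub> smult Q s (\<pi> (\<zero>, \<one>)) |r s. r \<in> carrier R \<and> s \<in> carrier R}"
    proof
      fix x assume "x \<in> carrier Q"
      then obtain p q where pq: "p \<in> carrier R" "q \<in> carrier R" "x = \<pi> (p, q)" using Q_elem by blast
      then have "x = smult Q p (\<pi> (\<one>, \<zero>)) \<oplus>\<^bsub>Q\<^esub> smult Q q (\<pi> (\<zero>, \<one>))" by simp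
      then show "x \<in> {smult Q r (\<pi> (\<one>, \<zero>)) \<oplus>\<^bsub>Q\<^esub> smult Q s (\<pi> (\<zero>, \<one>)) |r s. r \<in> carrier R \<and> s \<in> carrier R}"
        using pq by blast
    qed
    show "{smult Q r (\<pi> (\<one>, \<zero>)) \<oplus>\<^bsub>Q\<^esub> smult Q s (\<pi> (\<zero>, \<one>)) |r s. r \<in> carrier R \<and> s \<in> carrier R} \<subseteq> carrier Q"
    proof
      fix x assume "x \<in> {smult Q r (\<pi> (\<one>, \<zero>)) \<oplus>\<^bsub>Q\<^esub> smult Q s (\<pi> (\<zero>, \<one>)) |r s. r \<in> carrier R \<and> s \<in> carrier R}"
      then obtain r s where "r \<in> carrier R" "s \<in> carrier R" "x = smult Q r (\<pi> (\<one>, \<zero>)) \<oplus>\<^bsub>Q\<^esub> smult Q s (\<pi> (\<zero>, \<one>))"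
        by blast
      then show "x \<in> carrier Q" by simp
    qed
  qed
qed simp_all


lemma Q_finsum: assumes "finite I" "f \<in> I \<rightarrow> C2"
  shows "finsum Q (\<lambda>i. \<pi> (f i)) I = \<pi> (psum R f I)"
proof -
  interpret Qa: abelian_group Q by (rule Q_abelian_group)
  show ?thesis using assms
proof (induct I rule: finite_induct)
  case empty
  have "finsum Q (\<lambda>i. \<pi> (f i)) {} = \<zero>\<^bsub>Q\<^esub>" by (rule Qa.finsum_empty)
  then show ?case unfolding Q_zero psum_def by simp
next
  case (insert i F)
  have fF: "f \<in> F \<rightarrow> C2" using insert(4) by (simp add: Pi_iff)
  have fi: "f i \<in> C2" using insert(4) by (simp add: Pi_iff)
  have cf: "(\<lambda>j. fst (f j)) \<in> F \<rightarrow> carrier R" "(\<lambda>j. snd (f j)) \<in> F \<rightarrow> carrier R"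
    using C2_fst[OF funcset_mem[OF fF]] C2_snd[OF funcset_mem[OF fF]] by (auto intro!: Pi_I)
  have pF: "(\<lambda>j. \<pi> (f j)) \<in> F \<rightarrow> carrier Q"
    unfolding Q_carrier using funcset_mem[OF fF] by (intro Pi_I imageI)
  have pi: "\<pi> (f i) \<in> carrier Q" unfolding Q_carrier using fi by (rule imageI)
  have "finsum Q (\<lambda>i. \<pi> (f i)) (insert i F) = \<pi> (f i) \<oplus>\<^bsub>Q\<^esub> finsum Q (\<lambda>i. \<pi> (f i)) F"
    by (rule Qa.finsum_insert[OF insert(1,2) pF pi])
  also have "finsum Q (\<lambda>i. \<pi> (f i)) F = \<pi> (psum R f F)" using insert(3)[OF fF] .
  also have "\<pi> (f i) \<oplus>\<^bsub>Q\<^esub> \<pi> (psum R f F) = \<pi> (padd (f i) (psum R f F))"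
    using fi cf by (intro Q_add) (auto simp: psum_def C2_def intro: finsum_closed)
  also have "padd (f i) (psum R f F) = psum R f (insert i F)"
    unfolding padd_def psum_def
    using finsum_insert[OF insert(1,2) cf(1)] finsum_insert[OF insert(1,2) cf(2)] C2_fst[OF fi] C2_snd[OF fi]
    by simp
  finally show ?case .
qed
qed

end



context ring begin
lemma finsum_comb:
  assumes "finite I" "f \<in> I \<rightarrow> carrier R" "g \<in> I \<rightarrow> carrier R"
    "x \<in> carrier R" "y \<in> carrier R" "z \<in> carrier R"
  shows "(\<Oplus>i\<in>I. z \<otimes> (x \<otimes> f i \<oplus> y \<otimes> g i)) = z \<otimes> (x \<otimes> (\<Oplus>i\<in>I. f i) \<oplus> y \<otimes> (\<Oplus>i\<in>I. g i))"
proof -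
  have xf: "(\<lambda>i. x \<otimes> f i) \<in> I \<rightarrow> carrier R" "(\<lambda>i. y \<otimes> g i) \<in> I \<rightarrow> carrier R"
    using assms by auto
  have "(\<Oplus>i\<in>I. z \<otimes> (x \<otimes> f i \<oplus> y \<otimes> g i)) = z \<otimes> (\<Oplus>i\<in>I. (x \<otimes> f i \<oplus> y \<otimes> g i))"
    using assms xf by (subst finsum_rdistr) auto
  also have "(\<Oplus>i\<in>I. (x \<otimes> f i \<oplus> y \<otimes> g i)) = (\<Oplus>i\<in>I. x \<otimes> f i) \<oplus> (\<Oplus>i\<in>I. y \<otimes> g i)"
    using xf by (rule finsum_addf)
  also have "(\<Oplus>i\<in>I. x \<otimes> f i) = x \<otimes> (\<Oplus>i\<in>I. f i)" using assms by (subst finsum_rdistr) auto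
  also have "(\<Oplus>i\<in>I. y \<otimes> g i) = y \<otimes> (\<Oplus>i\<in>I. g i)" using assms by (subst finsum_rdistr) auto
  finally show ?thesis .
qed
end

context lrm begin

lemma finsum_M: assumes "finite I" "\<forall>i\<in>I. g i \<in> M" shows "finsum R g I \<in> M"
  using assms
proof (induct I rule: finite_induct)
  case empty then show ?case using M_zero by simp
next
  case (insert i F)
  have "g \<in> F \<rightarrow> carrier R" using insert M_carr by auto
  moreover have "g i \<in> carrier R" using insert M_carr by auto
  ultimately have "finsum R g (insert i F) = g i \<oplus> finsum R g F"
    using insert(1,2) by (simp add: finsum_insert)
  then show ?case using insert M_add by simp
qed

lemma foldr_closed: "set xs \<subseteq> carrier R \<Longrightarrow> foldr (\<lambda>x y. x \<otimes> y) xs \<one> \<in> carrier R"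
  by (induct xs) auto

lemma M_P2_zero:
  assumes P: "M \<subseteq> {\<nu> \<otimes> \<alpha> | \<nu> \<alpha>. \<nu> \<in> M \<and> \<alpha> \<in> M}"
  shows "M = {\<zero>}"
proof -
  have main: "\<And>x. x \<in> M \<Longrightarrow> \<exists>xs. length xs = Suc m \<and> set xs \<subseteq> M \<and> x = foldr (\<lambda>x y. x \<otimes> y) xs \<one>" for m
  proof (induct m arbitrary: x)
    case 0
    have "x = foldr (\<lambda>x y. x \<otimes> y) [x] \<one>" using M_carr[OF 0] by simp
    moreover have "length [x] = Suc 0" "set [x] \<subseteq> M" using 0 by auto
    ultimately show ?case by blast
  next
    case (Suc m)
    then obtain xs where xs: "length xs = Suc m" "set xs \<subseteq> M" "x = foldr (\<lambda>x y. x \<otimes> y) xs \<one>" by blast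
    then obtain h t where ht: "xs = h # t" by (cases xs) auto
    have hM: "h \<in> M" and tM: "set t \<subseteq> M" and lt: "length t = m" using xs ht by auto
    then obtain \<nu> \<alpha> where na: "h = \<nu> \<otimes> \<alpha>" "\<nu> \<in> M" "\<alpha> \<in> M" using P by blast
    define F where "F = foldr (\<lambda>x y. x \<otimes> y) t \<one>"
    have tc: "F \<in> carrier R" unfolding F_def using tM M_sub by (intro foldr_closed) auto
    have "x = h \<otimes> F" unfolding F_def using xs(3) ht by simp
    also have "\<dots> = (\<nu> \<otimes> \<alpha>) \<otimes> F" using na(1) by simp
    also have "\<dots> = \<nu> \<otimes> (\<alpha> \<otimes> F)" by (rule m_assoc[OF M_carr[OF na(2)] M_carr[OF na(3)] tc])
    also have "\<dots> = foldr (\<lambda>x y. x \<otimes> y) (\<nu> # \<alpha> # t) \<one>" unfolding F_def by simp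
    finally have "x = foldr (\<lambda>x y. x \<otimes> y) (\<nu> # \<alpha> # t) \<one>" .
    moreover have "length (\<nu> # \<alpha> # t) = Suc (Suc m)" using lt by simp
    moreover have "set (\<nu> # \<alpha> # t) \<subseteq> M" using tM na by simp
    ultimately show ?case by blast
  qed
  have "\<And>x. x \<in> M \<Longrightarrow> x = \<zero>"
  proof -
    fix x assume x: "x \<in> M"
    obtain m where m: "k = Suc m" using k_pos by (cases k) auto
    obtain xs where xs: "length xs = k" "set xs \<subseteq> M" "x = foldr (\<lambda>x y. x \<otimes> y) xs \<one>"
      using main[OF x] m by blast
    have "length xs = k \<and> set xs \<subseteq> M" using xs by simp
    from pz[unfolded ideal_power_zero_def, rule_format, OF this] show "x = \<zero>" using xs(3) by simp
  qed
  then show ?thesis using M_zero by blast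
qed

end

locale lq = lrm R M k for R (structure) and M k +
  fixes a b assumes aM: "a \<in> M" and bM: "b \<in> M"

sublocale lq \<subseteq> qm R a b
  using aM bM M_carr by unfold_locales auto

context lq begin

lemma key:
  assumes ds: "direct_sum_of_cyclics R Q"
    and aP: "a \<notin> {\<nu> \<otimes> al | \<nu> al. \<nu> \<in> M \<and> al \<in> M}"
  shows "\<exists>r\<in>carrier R. b = a \<otimes> r"
proof -
  interpret Qa: abelian_group Q by (rule Q_abelian_group)
  have ac: "a \<in> carrier R" and bc: "b \<in> carrier R" using aM bM M_carr by auto
  obtain xs where xs: "set xs \<subseteq> carrier Q"
    and span: "\<forall>m\<in>carrier Q. \<exists>c\<in>{..<length xs} \<rightarrow> carrier R.
        m = finsum Q (\<lambda>i. smult Q (c i) (xs ! i)) {..<length xs}"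
    and ind: "\<forall>c\<in>{..<length xs} \<rightarrow> carrier R.
        finsum Q (\<lambda>i. smult Q (c i) (xs ! i)) {..<length xs} = \<zero>\<^bsub>Q\<^esub> \<longrightarrow>
        (\<forall>i<length xs. smult Q (c i) (xs ! i) = \<zero>\<^bsub>Q\<^esub>)"
    using ds unfolding direct_sum_of_cyclics_def by blast
  define I where "I = {..<length xs}"
  define Xv where "Xv i = xs ! i" for i
  define al where "al i = fst (Xv i)" for i
  define be where "be i = snd (Xv i)" for i
  have finI: "finite I" unfolding I_def by simp
  have XQ: "Xv i \<in> carrier Q" if "i \<in> I" for i
    using xs that unfolding Xv_def I_def by auto
  have XC: "Xv i \<in> C2" and Xpi: "\<pi> (Xv i) = Xv i" if "i \<in> I" for i
    using XQ[OF that] unfolding Q_carrier by auto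
  have alc: "al i \<in> carrier R" and bec: "be i \<in> carrier R" if "i \<in> I" for i
    unfolding al_def be_def using XC[OF that] C2_fst C2_snd by auto
  have sm: "smult Q c (Xv i) = \<pi> (c \<otimes> al i, c \<otimes> be i)" if "c \<in> carrier R" "i \<in> I" for c i
  proof -
    have "smult Q c (Xv i) = smult Q c (\<pi> (Xv i))" using Xpi[OF that(2)] by simp
    also have "\<dots> = \<pi> (psm c (Xv i))" using that XC by simp
    finally show ?thesis unfolding psm_def al_def be_def .
  qed
  have sumQ: "finsum Q (\<lambda>i. smult Q (c i) (Xv i)) I
      = \<pi> (\<Oplus>i\<in>I. c i \<otimes> al i, \<Oplus>i\<in>I. c i \<otimes> be i)" if c: "c \<in> I \<rightarrow> carrier R" for c
  proof -
    have "finsum Q (\<lambda>i. smult Q (c i) (Xv i)) I = finsum Q (\<lambda>i. \<pi> (c i \<otimes> al i, c i \<otimes> be i)) I"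
    proof (rule Qa.finsum_cong')
      show "(\<lambda>i. \<pi> (c i \<otimes> al i, c i \<otimes> be i)) \<in> I \<rightarrow> carrier Q"
        using c alc bec by (intro Pi_I pi_in_Q) auto
      show "\<And>i. i \<in> I \<Longrightarrow> smult Q (c i) (Xv i) = \<pi> (c i \<otimes> al i, c i \<otimes> be i)"
        using sm c by auto
    qed simp
    also have "\<dots> = \<pi> (psum R (\<lambda>i. (c i \<otimes> al i, c i \<otimes> be i)) I)"
      using c alc bec finI by (intro Q_finsum) (auto simp: Pi_iff)
    finally show ?thesis unfolding psum_def by simp
  qed
  have gen: "\<exists>c\<in>I \<rightarrow> carrier R. \<exists>t\<in>carrier R.
      x \<ominus> (\<Oplus>i\<in>I. c i \<otimes> al i) = t \<otimes> a \<and> y \<ominus> (\<Oplus>i\<in>I. c i \<otimes> be i) = t \<otimes> b"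
    if xy: "x \<in> carrier R" "y \<in> carrier R" for x y
  proof -
    obtain c where c: "c \<in> I \<rightarrow> carrier R" "\<pi> (x, y) = finsum Q (\<lambda>i. smult Q (c i) (Xv i)) I"
      using span xy pi_in_Q[OF xy] unfolding I_def Xv_def by blast
    have sc: "(\<Oplus>i\<in>I. c i \<otimes> al i) \<in> carrier R" "(\<Oplus>i\<in>I. c i \<otimes> be i) \<in> carrier R"
      using c alc bec by (auto intro!: finsum_closed)
    have "\<pi> (x, y) = \<pi> (\<Oplus>i\<in>I. c i \<otimes> al i, \<Oplus>i\<in>I. c i \<otimes> be i)" using c sumQ by simp
    then have "E (x, y) (\<Oplus>i\<in>I. c i \<otimes> al i, \<Oplus>i\<in>I. c i \<otimes> be i)"
      using pi_eq_iff xy sc by simp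
    then show ?thesis using c unfolding eqv_def by auto
  qed
  obtain c t1 where c: "c \<in> I \<rightarrow> carrier R" "t1 \<in> carrier R"
    and c1: "\<one> \<ominus> (\<Oplus>i\<in>I. c i \<otimes> al i) = t1 \<otimes> a" and c2: "\<zero> \<ominus> (\<Oplus>i\<in>I. c i \<otimes> be i) = t1 \<otimes> b"
    using gen[of \<one> \<zero>] by auto
  obtain d t2 where d: "d \<in> I \<rightarrow> carrier R" "t2 \<in> carrier R"
    and d1: "\<zero> \<ominus> (\<Oplus>i\<in>I. d i \<otimes> al i) = t2 \<otimes> a" and d2: "\<one> \<ominus> (\<Oplus>i\<in>I. d i \<otimes> be i) = t2 \<otimes> b"
    using gen[of \<zero> \<one>] by auto
  define A1 where "A1 = (\<Oplus>i\<in>I. c i \<otimes> al i)"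
  define B1 where "B1 = (\<Oplus>i\<in>I. c i \<otimes> be i)"
  define A2 where "A2 = (\<Oplus>i\<in>I. d i \<otimes> al i)"
  define B2 where "B2 = (\<Oplus>i\<in>I. d i \<otimes> be i)"
  have fc: "(\<lambda>i. c i \<otimes> al i) \<in> I \<rightarrow> carrier R" "(\<lambda>i. c i \<otimes> be i) \<in> I \<rightarrow> carrier R"
    "(\<lambda>i. d i \<otimes> al i) \<in> I \<rightarrow> carrier R" "(\<lambda>i. d i \<otimes> be i) \<in> I \<rightarrow> carrier R"
    using c d alc bec by auto
  have sc: "A1 \<in> carrier R" "B1 \<in> carrier R" "A2 \<in> carrier R" "B2 \<in> carrier R"
    unfolding A1_def B1_def A2_def B2_def using fc by (auto intro: finsum_closed)
  define w where "w = a \<otimes> t1 \<oplus> b \<otimes> t2"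
  have wM: "w \<in> M" unfolding w_def using M_rmult M_add aM bM c d by simp
  have wc: "w \<in> carrier R" using wM M_carr by simp
  define u where "u = \<one> \<ominus> w"
  have uc: "u \<in> carrier R" unfolding u_def using wc by simp
  have "u \<notin> M"
  proof
    assume "u \<in> M"
    then have "u \<oplus> w \<in> M" using wM M_add by simp
    moreover have "u \<oplus> w = \<one>" unfolding u_def using wc by algebra
    ultimately show False using one_notin by simp
  qed
  then have uU: "u \<in> Units R" using notM_unit uc by simp
  have iuc: "inv u \<in> carrier R" using uU by simp
  define p where "p i = inv u \<otimes> (a \<otimes> c i \<oplus> b \<otimes> d i)" for i
  have pc: "p i \<in> carrier R" if "i \<in> I" for i unfolding p_def using c d that iuc ac bc by (auto simp: Pi_iff)
  have pM: "p i \<in> M" if "i \<in> I" for i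
    unfolding p_def using c d that iuc M_rmult M_add M_lmult aM bM by (auto simp: Pi_iff)
  have A1e: "A1 = \<one> \<ominus> t1 \<otimes> a"
  proof -
    have "A1 = \<one> \<ominus> (\<one> \<ominus> A1)" using sc by algebra
    then show ?thesis using c1 unfolding A1_def by simp
  qed
  have A2e: "A2 = \<ominus> (t2 \<otimes> a)"
  proof -
    have "A2 = \<ominus> (\<zero> \<ominus> A2)" using sc by algebra
    then show ?thesis using d1 unfolding A2_def by simp
  qed
  have B1e: "B1 = \<ominus> (t1 \<otimes> b)"
  proof -
    have "B1 = \<ominus> (\<zero> \<ominus> B1)" using sc by algebra
    then show ?thesis using c2 unfolding B1_def by simp
  qed
  have B2e: "B2 = \<one> \<ominus> t2 \<otimes> b"
  proof -
    have "B2 = \<one> \<ominus> (\<one> \<ominus> B2)" using sc by algebra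
    then show ?thesis using d2 unfolding B2_def by simp
  qed
  have sumA: "(\<Oplus>i\<in>I. p i \<otimes> al i) = a"
  proof -
    have "(\<Oplus>i\<in>I. p i \<otimes> al i) = (\<Oplus>i\<in>I. inv u \<otimes> (a \<otimes> (c i \<otimes> al i) \<oplus> b \<otimes> (d i \<otimes> al i)))"
    proof (rule finsum_cong')
      show "\<And>i. i \<in> I \<Longrightarrow> p i \<otimes> al i = inv u \<otimes> (a \<otimes> (c i \<otimes> al i) \<oplus> b \<otimes> (d i \<otimes> al i))"
      proof -
        fix i assume i: "i \<in> I"
        have "c i \<in> carrier R" "d i \<in> carrier R" "al i \<in> carrier R" using c d i alc by auto
        then show "p i \<otimes> al i = inv u \<otimes> (a \<otimes> (c i \<otimes> al i) \<oplus> b \<otimes> (d i \<otimes> al i))"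
          unfolding p_def using iuc ac bc by algebra
      qed
      show "(\<lambda>i. inv u \<otimes> (a \<otimes> (c i \<otimes> al i) \<oplus> b \<otimes> (d i \<otimes> al i))) \<in> I \<rightarrow> carrier R"
        using fc iuc ac bc by (auto simp: Pi_iff)
    qed simp
    also have "\<dots> = inv u \<otimes> (a \<otimes> A1 \<oplus> b \<otimes> A2)"
      unfolding A1_def A2_def using finsum_comb[OF finI fc(1) fc(3) ac bc iuc] .
    also have "a \<otimes> A1 \<oplus> b \<otimes> A2 = u \<otimes> a"
      unfolding A1e A2e u_def w_def using ac bc c(2) d(2) by algebra
    also have "inv u \<otimes> (u \<otimes> a) = a"
      using m_assoc[OF Units_inv_closed[OF uU] Units_closed[OF uU] ac] uU ac by simp
    finally show ?thesis .
  qed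
  have sumB: "(\<Oplus>i\<in>I. p i \<otimes> be i) = b"
  proof -
    have "(\<Oplus>i\<in>I. p i \<otimes> be i) = (\<Oplus>i\<in>I. inv u \<otimes> (a \<otimes> (c i \<otimes> be i) \<oplus> b \<otimes> (d i \<otimes> be i)))"
    proof (rule finsum_cong')
      show "\<And>i. i \<in> I \<Longrightarrow> p i \<otimes> be i = inv u \<otimes> (a \<otimes> (c i \<otimes> be i) \<oplus> b \<otimes> (d i \<otimes> be i))"
      proof -
        fix i assume i: "i \<in> I"
        have "c i \<in> carrier R" "d i \<in> carrier R" "be i \<in> carrier R" using c d i bec by auto
        then show "p i \<otimes> be i = inv u \<otimes> (a \<otimes> (c i \<otimes> be i) \<oplus> b \<otimes> (d i \<otimes> be i))"
          unfolding p_def using iuc ac bc by algebra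
      qed
      show "(\<lambda>i. inv u \<otimes> (a \<otimes> (c i \<otimes> be i) \<oplus> b \<otimes> (d i \<otimes> be i))) \<in> I \<rightarrow> carrier R"
        using fc iuc ac bc by (auto simp: Pi_iff)
    qed simp
    also have "\<dots> = inv u \<otimes> (a \<otimes> B1 \<oplus> b \<otimes> B2)"
      unfolding B1_def B2_def using finsum_comb[OF finI fc(2) fc(4) ac bc iuc] .
    also have "a \<otimes> B1 \<oplus> b \<otimes> B2 = u \<otimes> b"
      unfolding B1e B2e u_def w_def using ac bc c(2) d(2) by algebra
    also have "inv u \<otimes> (u \<otimes> b) = b"
      using m_assoc[OF Units_inv_closed[OF uU] Units_closed[OF uU] bc] uU bc by simp
    finally show ?thesis .
  qed
  have pI: "p \<in> I \<rightarrow> carrier R" using pc by auto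
  have Eab: "E (a, b) (\<zero>, \<zero>)"
  proof -
    have e: "fst (a, b) \<ominus> fst (\<zero>, \<zero>) = \<one> \<otimes> a \<and> snd (a, b) \<ominus> snd (\<zero>, \<zero>) = \<one> \<otimes> b"
      using ac bc by (simp add: minus_eq)
    have "(a, b) \<in> C2" "(\<zero>, \<zero>) \<in> C2" using ac bc by auto
    then show ?thesis unfolding eqv_def using e one_closed by blast
  qed
  have "finsum Q (\<lambda>i. smult Q (p i) (Xv i)) I = \<pi> (a, b)" using sumQ[OF pI] sumA sumB by simp
  also have "\<dots> = \<pi> (\<zero>, \<zero>)" using Eab pi_eq_iff ac bc by simp
  finally have "finsum Q (\<lambda>i. smult Q (p i) (Xv i)) I = \<zero>\<^bsub>Q\<^esub>" unfolding Q_zero .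
  then have zi: "\<forall>i\<in>I. smult Q (p i) (Xv i) = \<zero>\<^bsub>Q\<^esub>"
    using ind pI unfolding I_def Xv_def by blast
  have lamex: "\<forall>i\<in>I. \<exists>l. l \<in> carrier R \<and> p i \<otimes> al i = l \<otimes> a \<and> p i \<otimes> be i = l \<otimes> b"
  proof
    fix i assume i: "i \<in> I"
    have "\<pi> (p i \<otimes> al i, p i \<otimes> be i) = \<pi> (\<zero>, \<zero>)"
      using zi i sm[OF pc[OF i] i] unfolding Q_zero by simp
    then have "E (p i \<otimes> al i, p i \<otimes> be i) (\<zero>, \<zero>)"
      using pi_eq_iff pc[OF i] alc[OF i] bec[OF i] by simp
    then obtain l where l: "l \<in> carrier R" "p i \<otimes> al i \<ominus> \<zero> = l \<otimes> a" "p i \<otimes> be i \<ominus> \<zero> = l \<otimes> b"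
      unfolding eqv_def by auto
    have "p i \<otimes> al i \<ominus> \<zero> = p i \<otimes> al i" "p i \<otimes> be i \<ominus> \<zero> = p i \<otimes> be i"
      using pc[OF i] alc[OF i] bec[OF i] by (simp_all add: minus_eq)
    then show "\<exists>l. l \<in> carrier R \<and> p i \<otimes> al i = l \<otimes> a \<and> p i \<otimes> be i = l \<otimes> b" using l by auto
  qed
  obtain lam where lam: "\<forall>i\<in>I. lam i \<in> carrier R \<and> p i \<otimes> al i = lam i \<otimes> a \<and> p i \<otimes> be i = lam i \<otimes> b"
    using bchoice[OF lamex] by blast
  have lamc: "lam \<in> I \<rightarrow> carrier R" using lam by auto
  define L where "L = finsum R lam I"
  have Lc: "L \<in> carrier R" unfolding L_def using lamc by (rule finsum_closed)
  have aL: "a = L \<otimes> a"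
  proof -
    have "a = (\<Oplus>i\<in>I. p i \<otimes> al i)" using sumA by simp
    also have "\<dots> = (\<Oplus>i\<in>I. lam i \<otimes> a)"
    proof (rule finsum_cong')
      show "(\<lambda>i. lam i \<otimes> a) \<in> I \<rightarrow> carrier R" using lamc ac by (auto simp: Pi_iff)
      show "\<And>i. i \<in> I \<Longrightarrow> p i \<otimes> al i = lam i \<otimes> a" using lam by auto
    qed simp
    also have "\<dots> = L \<otimes> a" unfolding L_def using finsum_ldistr[OF finI ac lamc] by simp
    finally show ?thesis .
  qed
  have zP: "\<zero> \<in> {\<nu> \<otimes> al | \<nu> al. \<nu> \<in> M \<and> al \<in> M}" using M_zero by force
  have LnM: "L \<notin> M"
  proof
    assume LM: "L \<in> M"
    define v where "v = \<one> \<ominus> L"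
    have vc: "v \<in> carrier R" unfolding v_def using Lc by simp
    have "v \<notin> M"
    proof
      assume "v \<in> M"
      then have "v \<oplus> L \<in> M" using LM M_add by simp
      moreover have "v \<oplus> L = \<one>" unfolding v_def using Lc by algebra
      ultimately show False using one_notin by simp
    qed
    then have vU: "v \<in> Units R" using notM_unit vc by simp
    have "v \<otimes> a = a \<ominus> L \<otimes> a" unfolding v_def using Lc ac by algebra
    also have "\<dots> = \<zero>" using aL[symmetric] ac by (simp add: r_neg minus_eq)
    finally have va: "v \<otimes> a = \<zero>" .
    have "a = inv v \<otimes> (v \<otimes> a)"
      using m_assoc[OF Units_inv_closed[OF vU] Units_closed[OF vU] ac] vU ac by simp
    then have "a = \<zero>" using va vU by simp
    then show False using aP zP by blast
  qed
  obtain i where i: "i \<in> I" "lam i \<notin> M"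
  proof (rule ccontr)
    assume "\<not> thesis"
    then have "\<forall>i\<in>I. lam i \<in> M" using that by blast
    then have "L \<in> M" unfolding L_def using finsum_M finI by blast
    then show False using LnM by simp
  qed
  have lc: "lam i \<in> carrier R" using lam i by auto
  have lU: "lam i \<in> Units R" using notM_unit lc i by simp
  define \<nu> where "\<nu> = inv (lam i) \<otimes> p i"
  have \<nu>M: "\<nu> \<in> M" unfolding \<nu>_def using M_lmult pM[OF i(1)] lU by simp
  have \<nu>c: "\<nu> \<in> carrier R" using \<nu>M M_carr by simp
  have a_eq: "\<nu> \<otimes> al i = a"
  proof -
    have "\<nu> \<otimes> al i = inv (lam i) \<otimes> (p i \<otimes> al i)"
      unfolding \<nu>_def using m_assoc lU pc[OF i(1)] alc[OF i(1)] by simp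
    also have "\<dots> = inv (lam i) \<otimes> (lam i \<otimes> a)" using lam i by simp
    also have "\<dots> = a" using m_assoc[OF Units_inv_closed[OF lU] lc ac] lU ac by simp
    finally show ?thesis .
  qed
  have b_eq: "\<nu> \<otimes> be i = b"
  proof -
    have "\<nu> \<otimes> be i = inv (lam i) \<otimes> (p i \<otimes> be i)"
      unfolding \<nu>_def using m_assoc lU pc[OF i(1)] bec[OF i(1)] by simp
    also have "\<dots> = inv (lam i) \<otimes> (lam i \<otimes> b)" using lam i by simp
    also have "\<dots> = b" using m_assoc[OF Units_inv_closed[OF lU] lc bc] lU bc by simp
    finally show ?thesis .
  qed
  have alnM: "al i \<notin> M"
  proof
    assume "al i \<in> M"
    then have "a \<in> {\<nu> \<otimes> al | \<nu> al. \<nu> \<in> M \<and> al \<in> M}" using a_eq \<nu>M by blast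
    then show False using aP by simp
  qed
  have alU: "al i \<in> Units R" using notM_unit alc[OF i(1)] alnM by simp
  have "a \<otimes> inv (al i) = \<nu>"
  proof -
    have "a \<otimes> inv (al i) = \<nu> \<otimes> (al i \<otimes> inv (al i))"
      using a_eq[symmetric] m_assoc[OF \<nu>c alc[OF i(1)] Units_inv_closed[OF alU]] by simp
    then show ?thesis using alU \<nu>c by simp
  qed
  then have "b = a \<otimes> (inv (al i) \<otimes> be i)"
    using b_eq m_assoc[OF ac Units_inv_closed[OF alU] bec[OF i(1)]] by simp
  moreover have "inv (al i) \<otimes> be i \<in> carrier R" using alU bec[OF i(1)] by simp
  ultimately show ?thesis by blast
qed

end



context lrm begin
lemma M_principal_right:
  assumes H: "\<forall>N :: ('a, 'a \<times> 'a) module. left_module R N \<and> generated_by_two R N \<longrightarrow> direct_sum_of_cyclics R N"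
  shows "\<exists>a\<in>M. M = {a \<otimes> r | r. r \<in> carrier R}"
proof (cases "M \<subseteq> {\<nu> \<otimes> al | \<nu> al. \<nu> \<in> M \<and> al \<in> M}")
  case True
  then have M0: "M = {\<zero>}" by (rule M_P2_zero)
  have "{\<zero> \<otimes> r | r. r \<in> carrier R} = {\<zero>}"
  proof
    show "{\<zero> \<otimes> r | r. r \<in> carrier R} \<subseteq> {\<zero>}" by auto
    have "\<zero> = \<zero> \<otimes> \<zero>" by simp
    then show "{\<zero>} \<subseteq> {\<zero> \<otimes> r | r. r \<in> carrier R}" using zero_closed by blast
  qed
  then show ?thesis using M0 by blast
next
  case False
  then obtain a where aM: "a \<in> M" and aP: "a \<notin> {\<nu> \<otimes> al | \<nu> al. \<nu> \<in> M \<and> al \<in> M}" by blast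
  have "M = {a \<otimes> r | r. r \<in> carrier R}"
  proof
    show "{a \<otimes> r | r. r \<in> carrier R} \<subseteq> M" using M_rmult aM by auto
    show "M \<subseteq> {a \<otimes> r | r. r \<in> carrier R}"
    proof
      fix b assume bM: "b \<in> M"
      interpret L: lq R M k a b
        by (intro lq.intro lrm_axioms lq_axioms.intro aM bM)
      have "direct_sum_of_cyclics R (QM a b)" using H L.Q_left_module L.Q_gen2 by blast
      then obtain r where "r \<in> carrier R" "b = a \<otimes> r" using L.key aP by blast
      then show "b \<in> {a \<otimes> r | r. r \<in> carrier R}" by blast
    qed
  qed
  then show ?thesis using aM by blast
qed
end

theorem theorem2p6:
  fixes R :: "'a ring" and \<M> :: "'a set" and k :: nat
  assumes "ring R"
    and "local_ring R"
    and "maximal_left_ideal R \<M>"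
    and "fg_left_ideal R \<M>"
    and "fg_right_ideal R \<M>"
    and "ideal_power_zero R \<M> k"
    and "\<forall>M :: ('a, 'a \<times> 'a) module.
           left_module R M \<and> generated_by_two R M \<longrightarrow> direct_sum_of_cyclics R M"
  shows "(left_artinian R \<and> principal_left_ideal_ring R) \<or>
         (right_artinian R \<and> principal_right_ideal_ring R)"
proof -
  interpret lrm R \<M> k
    by (intro lrm.intro lrm_axioms.intro assms(1,3,6))
  obtain a where "a \<in> \<M>" "\<M> = {a \<otimes>\<^bsub>R\<^esub> r | r. r \<in> carrier R}"
    using M_principal_right[OF assms(7)] by blast
  then have "right_artinian R \<and> principal_right_ideal_ring R" by (rule right_conclusion)
  then show ?thesis by blast
qed


end
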